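(* Consider the composite linear model described in the context, with squared ($\ell_2$) loss, and let $\mathcal{S}=\{(\mathbf{x}_i,y_i)\}_{i=1}^m$ be a dataset generated i.i.d. from it. Let $\mathcal{M}=[K]$ and $\mathcal{N}=[K-1]$, and let $\hat{\mathbf{A}}_{\mathcal{M}}$, $\hat{\mathbf{A}}_{\mathcal{N}}$ denote the projection matrices estimated (by empirical risk minimization) using the $\mathcal{M}$ modalities (over $\mathcal{G}_{\mathcal{M}}=\mathcal{G}$) and the $\mathcal{N}$ modalities (over $\mathcal{G}_{\mathcal{N}}$), respectively. Assume that $\hat{\mathbf{A}}_{\mathcal{M}}$ and $\mathbf{A}^\star$ have orthonormal columns. If $n=d$, then for a sufficiently large constant $C_b$, $$\gamma_{\mathcal{S}}(\mathcal{M},\mathcal{N}):=\eta(\hat{\mathbf{A}}_{\mathcal{M}})-\eta(\hat{\mathbf{A}}_{\mathcal{N}})\le 0.$$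
   Context: Data: $\mathbf{x}=(\mathbf{x}^{(1)},\dots,\mathbf{x}^{(K)})\in\mathbb{R}^d$ with $\mathbf{x}^{(k)}\in\mathbb{R}^{d_k}$ the feature vector of the $k$-th modality and $\sum_{k=1}^K d_k=d$; the distribution $\mathbb{P}_{\mathbf{x}}$ has a positive definite covariance matrix $\Sigma$. Labels are generated by $y=(\boldsymbol\beta^\star)^\top(\mathbf{A}^\star)^\top\mathbf{x}+\epsilon$, where $\epsilon$ is a random variable independent of $\mathbf{x}$ with zero mean and bounded second moment, $\mathbf{A}^\star\in\mathbb{R}^{d\times n}$, $\boldsymbol\beta^\star\in\mathbb{R}^n$ (with $\|\boldsymbol\beta^\star\|\le C_b$). Function classes: $\mathcal{G}=\{\mathbf{x}\mapsto\mathbf{A}^\top\mathbf{x}:\mathbf{A}\in\mathbb{R}^{d\times n}\}$, $\mathcal{H}=\{\mathbf{z}\mapsto\boldsymbol\beta^\top\mathbf{z}:\boldsymbol\beta\in\mathbb{R}^n,\|\boldsymbol\beta\|\le C_b\}$. For $\mathcal{M}=[K]$, $\mathcal{G}_{\mathcal{M}}=\mathcal{G}$; for $\mathcal{N}=[K-1]$, $\mathcal{G}_{\mathcal{N}}=\{\mathbf{x}\mapsto\begin{bmatrix}\mathbf{A}_{1:s}\\ \mathbf{0}\end{bmatrix}^\top\mathbf{x} : \mathbf{A}\in\mathbb{R}^{d\times n}\text{ with orthonormal columns}\}$, where $s=\sum_{k=1}^{K-1}d_k$, $\mathbf{A}_{1:s}$ denotes the first $s$ rows of $\mathbf{A}$,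 and $\mathbf{0}$ is the $d_K\times n$ zero block (so the last modality is ignored). The latent representation quality of a linear representation $\mathbf{x}\mapsto\mathbf{A}^\top\mathbf{x}$ under squared loss is $\eta(\mathbf{A})=\inf_{h\in\mathcal{H}}[r(h\circ g)-r(h^\star\circ g^\star)]=\inf_{\|\boldsymbol\beta\|\le C_b}\mathbb{E}_{\mathbf{x}}\big[|\boldsymbol\beta^\top\mathbf{A}^\top\mathbf{x}-(\boldsymbol\beta^\star)^\top(\mathbf{A}^\star)^\top\mathbf{x}|^2\big]$, where $r$ is the population squared-loss risk and $g^\star(\mathbf{x})=(\mathbf{A}^\star)^\top\mathbf{x}$, $h^\star(\mathbf{z})=(\boldsymbol\beta^\star)^\top\mathbf{z}$. *)

theory Defs
  imports "HOL-Probability.Probability"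
begin

text \<open>Vectors in R^k are represented as functions nat => real, only indices < k matter;
  a d x n matrix A is a function nat => nat => real, entry A i j for i < d, j < n.\<close>

definition vnorm :: "nat \<Rightarrow> (nat \<Rightarrow> real) \<Rightarrow> real" where
  "vnorm k v = sqrt (\<Sum>j<k. (v j)^2)"

definition linpred :: "nat \<Rightarrow> nat \<Rightarrow> (nat \<Rightarrow> nat \<Rightarrow> real) \<Rightarrow> (nat \<Rightarrow> real) \<Rightarrow> (nat \<Rightarrow> real) \<Rightarrow> real" where
  "linpred d n A \<beta> x = (\<Sum>j<n. \<beta> j * (\<Sum>i<d. A i j * x i))"

definition orthonormal_cols :: "nat \<Rightarrow> nat \<Rightarrow> (nat \<Rightarrow> nat \<Rightarrow> real) \<Rightarrow> bool" where
  "orthonormal_cols d n A \<longleftrightarrow>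
     (\<forall>j<n. \<forall>k<n. (\<Sum>i<d. A i j * A i k) = (if j = k then 1 else 0))"

definition trunc_rows :: "nat \<Rightarrow> (nat \<Rightarrow> nat \<Rightarrow> real) \<Rightarrow> (nat \<Rightarrow> nat \<Rightarrow> real)" where
  "trunc_rows s A = (\<lambda>i j. if i < s then A i j else 0)"

text \<open>Matrices representing G_N: [A_{1:s}; 0] with A (d x n) having orthonormal columns,
  where s = d_1 + ... + d_{K-1}.\<close>
definition GN_mats :: "nat list \<Rightarrow> nat \<Rightarrow> (nat \<Rightarrow> nat \<Rightarrow> real) set" where
  "GN_mats dims n = {trunc_rows (sum_list (butlast dims)) A | A. orthonormal_cols (sum_list dims) n A}"

definition emp_risk :: "nat \<Rightarrow> (nat \<Rightarrow> nat \<Rightarrow> real) \<Rightarrow> (nat \<Rightarrow> real) \<Rightarrow> nat \<Rightarrow> nat \<Rightarrow>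
    (nat \<Rightarrow> nat \<Rightarrow> real) \<Rightarrow> (nat \<Rightarrow> real) \<Rightarrow> real" where
  "emp_risk m xs ys d n A \<beta> = (1 / real m) * (\<Sum>i<m. (linpred d n A \<beta> (xs i) - ys i)^2)"

definition is_erm :: "(nat \<Rightarrow> nat \<Rightarrow> real) set \<Rightarrow> real \<Rightarrow> nat \<Rightarrow> (nat \<Rightarrow> nat \<Rightarrow> real) \<Rightarrow> (nat \<Rightarrow> real) \<Rightarrow>
    nat \<Rightarrow> nat \<Rightarrow> (nat \<Rightarrow> nat \<Rightarrow> real) \<Rightarrow> (nat \<Rightarrow> real) \<Rightarrow> bool" where
  "is_erm G Cb m xs ys d n A \<beta> \<longleftrightarrow>
     A \<in> G \<and> vnorm n \<beta> \<le> Cb \<and>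
     (\<forall>A'\<in>G. \<forall>\<beta>'. vnorm n \<beta>' \<le> Cb \<longrightarrow> emp_risk m xs ys d n A \<beta> \<le> emp_risk m xs ys d n A' \<beta>')"

definition eta :: "'w measure \<Rightarrow> ('w \<Rightarrow> nat \<Rightarrow> real) \<Rightarrow> nat \<Rightarrow> nat \<Rightarrow> real \<Rightarrow>
    (nat \<Rightarrow> nat \<Rightarrow> real) \<Rightarrow> (nat \<Rightarrow> real) \<Rightarrow> (nat \<Rightarrow> nat \<Rightarrow> real) \<Rightarrow> real" where
  "eta P X d n Cb Astar bstar A =
     Inf ((\<lambda>\<beta>. integral\<^sup>L P (\<lambda>\<omega>. (linpred d n A \<beta> (X \<omega>) - linpred d n Astar bstar (X \<omega>))^2))
          ` {\<beta>. vnorm n \<beta> \<le> Cb})"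

definition cov_mat :: "'w measure \<Rightarrow> ('w \<Rightarrow> nat \<Rightarrow> real) \<Rightarrow> nat \<Rightarrow> nat \<Rightarrow> real" where
  "cov_mat P X i j = integral\<^sup>L P (\<lambda>\<omega>. (X \<omega> i - integral\<^sup>L P (\<lambda>\<nu>. X \<nu> i)) *
                                           (X \<omega> j - integral\<^sup>L P (\<lambda>\<nu>. X \<nu> j)))"

definition cov_pos_def :: "'w measure \<Rightarrow> ('w \<Rightarrow> nat \<Rightarrow> real) \<Rightarrow> nat \<Rightarrow> bool" where
  "cov_pos_def P X d \<longleftrightarrow>
     (\<forall>v. (\<exists>i<d. v i \<noteq> 0) \<longrightarrow> (\<Sum>i<d. \<Sum>j<d. v i * cov_mat P X i j * v j) > 0)"

end

theory Submission
  imports Defs "Jordan_Normal_Form.Determinant"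
begin

lemma square_orth:
  assumes "orthonormal_cols d d A" "i < d" "k < d"
  shows "(\<Sum>j<d. A i j * A k j) = (if i = k then 1 else 0)"
proof -
  define M where "M = mat d d (\<lambda>(i,j). A i j)"
  have M: "M \<in> carrier_mat d d" unfolding M_def by simp
  have MT: "transpose_mat M \<in> carrier_mat d d" using M by simp
  have "transpose_mat M * M = 1\<^sub>m d"
  proof (rule eq_matI)
    fix i j assume ij: "i < dim_row (1\<^sub>m d)" "j < dim_col (1\<^sub>m d)"
    then have "(transpose_mat M * M) $$ (i, j) = (\<Sum>l<d. A l i * A l j)"
      unfolding M_def by (simp add: scalar_prod_def lessThan_atLeast0)
    also have "\<dots> = 1\<^sub>m d $$ (i, j)" using assms(1) ij unfolding orthonormal_cols_def by simp
    finally show "(transpose_mat M * M) $$ (i, j) = 1\<^sub>m d $$ (i, j)" .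
  qed (use M in auto)
  then have "M * transpose_mat M = 1\<^sub>m d" using mat_mult_left_right_inverse[OF MT M] by simp
  then have "(M * transpose_mat M) $$ (i, k) = 1\<^sub>m d $$ (i, k)" by simp
  then show ?thesis using assms(2,3) unfolding M_def by (simp add: scalar_prod_def lessThan_atLeast0)
qed

lemma norm_pres:
  assumes "orthonormal_cols d n B"
  shows "(\<Sum>i<d. (\<Sum>j<n. B i j * v j)^2) = (\<Sum>j<n. (v j)^2)"
proof -
  have "(\<Sum>i<d. (\<Sum>j<n. B i j * v j)^2) = (\<Sum>i<d. \<Sum>j<n. \<Sum>k<n. v j * v k * (B i j * B i k))"
    by (simp add: power2_eq_square sum_product mult_ac)
  also have "\<dots> = (\<Sum>j<n. \<Sum>i<d. \<Sum>k<n. v j * v k * (B i j * B i k))"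
    by (rule sum.swap)
  also have "\<dots> = (\<Sum>j<n. \<Sum>k<n. \<Sum>i<d. v j * v k * (B i j * B i k))"
    by (rule sum.cong[OF refl], rule sum.swap)
  also have "\<dots> = (\<Sum>j<n. \<Sum>k<n. v j * v k * (\<Sum>i<d. B i j * B i k))"
    by (simp add: sum_distrib_left)
  also have "\<dots> = (\<Sum>j<n. \<Sum>k<n. v j * v k * (if j = k then 1 else 0))"
    using assms unfolding orthonormal_cols_def by simp
  also have "\<dots> = (\<Sum>j<n. (v j)^2)"
    by (simp add: power2_eq_square if_distrib[of "\<lambda>t. _ * t"] sum.delta cong: if_cong)
  finally show ?thesis .
qed

lemma lin_id:
  assumes rows: "\<And>i k. i < d \<Longrightarrow> k < d \<Longrightarrow> (\<Sum>j<d. AM i j * AM k j) = (if i = k then 1 else 0)"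
  shows "linpred d d AM (\<lambda>j. \<Sum>i<d. AM i j * c i) x = (\<Sum>i<d. x i * c i)"
proof -
  have "linpred d d AM (\<lambda>j. \<Sum>i<d. AM i j * c i) x = (\<Sum>j<d. \<Sum>i<d. \<Sum>k<d. x i * (c k * (AM i j * AM k j)))"
    unfolding linpred_def by (simp add: sum_distrib_left sum_distrib_right mult_ac)
  also have "\<dots> = (\<Sum>i<d. \<Sum>j<d. \<Sum>k<d. x i * (c k * (AM i j * AM k j)))"
    by (rule sum.swap)
  also have "\<dots> = (\<Sum>i<d. \<Sum>k<d. \<Sum>j<d. x i * (c k * (AM i j * AM k j)))"
    by (rule sum.cong[OF refl], rule sum.swap)
  also have "\<dots> = (\<Sum>i<d. \<Sum>k<d. x i * (c k * (\<Sum>j<d. AM i j * AM k j)))"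
    by (simp add: sum_distrib_left)
  also have "\<dots> = (\<Sum>i<d. \<Sum>k<d. x i * (c k * (if i = k then 1 else 0)))"
    by (intro sum.cong refl) (simp add: rows)
  also have "\<dots> = (\<Sum>i<d. x i * c i)"
    by (simp add: if_distrib[of "\<lambda>t. _ * t"] sum.delta cong: if_cong)
  finally show ?thesis .
qed

lemma lin_star:
  "linpred d n Astar bstar x = (\<Sum>i<d. x i * (\<Sum>j<n. Astar i j * bstar j))"
proof -
  have "linpred d n Astar bstar x = (\<Sum>j<n. \<Sum>i<d. x i * (Astar i j * bstar j))"
    unfolding linpred_def by (simp add: sum_distrib_left mult_ac)
  also have "\<dots> = (\<Sum>i<d. \<Sum>j<n. x i * (Astar i j * bstar j))" by (rule sum.swap)
  also have "\<dots> = (\<Sum>i<d. x i * (\<Sum>j<n. Astar i j * bstar j))" by (simp add: sum_distrib_left)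
  finally show ?thesis .
qed

theorem proposition1:
  fixes P :: "'w measure" and X :: "'w \<Rightarrow> nat \<Rightarrow> real" and eps :: "'w \<Rightarrow> real"
    and Y :: "'w \<Rightarrow> real" and dims :: "nat list" and d n :: nat
    and Astar :: "nat \<Rightarrow> nat \<Rightarrow> real" and bstar :: "nat \<Rightarrow> real"
  assumes "prob_space P"
    and "dims \<noteq> []" and "\<forall>k\<in>set dims. 0 < k" and "d = sum_list dims"
    and "\<forall>i<d. (\<lambda>\<omega>. X \<omega> i) \<in> borel_measurable P"
    and "\<forall>i<d. integrable P (\<lambda>\<omega>. (X \<omega> i)^2)"
    and "cov_pos_def P X d"
    and "eps \<in> borel_measurable P" and "integrable P (\<lambda>\<omega>. (eps \<omega>)^2)"
    and "integral\<^sup>L P eps = 0"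
    and "prob_space.indep_set P
              {eps -` S \<inter> space P | S. S \<in> sets borel}
              {(\<lambda>\<omega>. restrict (X \<omega>) {..<d}) -` S \<inter> space P | S. S \<in> sets (PiM {..<d} (\<lambda>_. borel))}"
    and "\<forall>\<omega>\<in>space P. Y \<omega> = linpred d n Astar bstar (X \<omega>) + eps \<omega>"
    and "orthonormal_cols d n Astar"
    and "n = d"
  shows "\<exists>C0. \<forall>Cb \<ge> C0. vnorm n bstar \<le> Cb \<longrightarrow>
           (\<forall>m xs ys AM bM AN bN.
              0 < m \<and>
              is_erm UNIV Cb m xs ys d n AM bM \<and>
              is_erm (GN_mats dims n) Cb m xs ys d n AN bN \<and>
              orthonormal_cols d n AM \<longrightarrow>
              eta P X d n Cb Astar bstar AM - eta P X d n Cb Astar bstar AN \<le> 0)"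
proof -
  have "n = d" using assms(14) .
  show ?thesis
  proof (rule exI[of _ 0], intro allI impI, elim conjE)
    fix Cb m xs ys AM bM AN bN
    assume Cb: "vnorm n bstar \<le> Cb" and orth: "orthonormal_cols d n AM"
    have Cb0: "0 \<le> Cb" using Cb unfolding vnorm_def by (meson order.trans real_sqrt_ge_zero sum_nonneg zero_le_power2)
    define f where "f = (\<lambda>\<beta>. integral\<^sup>L P (\<lambda>\<omega>. (linpred d n AM \<beta> (X \<omega>) - linpred d n Astar bstar (X \<omega>))^2))"
    define g where "g = (\<lambda>\<beta>. integral\<^sup>L P (\<lambda>\<omega>. (linpred d n AN \<beta> (X \<omega>) - linpred d n Astar bstar (X \<omega>))^2))"
    have f0: "0 \<le> f \<beta>" for \<beta> unfolding f_def by (rule integral_nonneg_AE) simp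
    have g0: "0 \<le> g \<beta>" for \<beta> unfolding g_def by (rule integral_nonneg_AE) simp
    define c where "c = (\<lambda>i. \<Sum>j<n. Astar i j * bstar j)"
    define \<beta> where "\<beta> = (\<lambda>j. \<Sum>i<d. AM i j * c i)"
    have orthd: "orthonormal_cols d d AM" using orth \<open>n = d\<close> by simp
    have rows: "(\<Sum>j<d. AM i j * AM k j) = (if i = k then 1 else 0)" if "i < d" "k < d" for i k
      using square_orth[OF orthd that] .
    have orthT: "orthonormal_cols d d (\<lambda>j i. AM i j)"
      unfolding orthonormal_cols_def using rows by simp
    have "vnorm n \<beta> = vnorm n bstar"
    proof -
      have "(\<Sum>j<n. (\<beta> j)^2) = (\<Sum>i<d. (c i)^2)"
        using norm_pres[OF orthT, of c] \<open>n = d\<close> unfolding \<beta>_def by (simp add: mult.commute)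
      also have "\<dots> = (\<Sum>j<n. (bstar j)^2)"
        using norm_pres[OF assms(13), of bstar] unfolding c_def .
      finally show ?thesis unfolding vnorm_def by simp
    qed
    then have bS: "vnorm n \<beta> \<le> Cb" using Cb by simp
    have lin: "linpred d n AM \<beta> x = linpred d n Astar bstar x" for x
    proof -
      have "linpred d n AM \<beta> x = (\<Sum>i<d. x i * c i)"
        unfolding \<beta>_def using lin_id[OF rows, of c x] \<open>n = d\<close> by simp
      then show ?thesis using lin_star[of d n Astar bstar x] unfolding c_def by simp
    qed
    have fb: "f \<beta> = 0" unfolding f_def lin by simp
    have "eta P X d n Cb Astar bstar AM \<le> 0"
    proof -
      have "Inf (f ` {\<beta>. vnorm n \<beta> \<le> Cb}) \<le> f \<beta>"
        by (rule cInf_lower) (use bS f0 in \<open>auto simp: bdd_below_def\<close>)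
      then show ?thesis unfolding eta_def f_def[symmetric] using fb by simp
    qed
    moreover have "0 \<le> eta P X d n Cb Astar bstar AN"
    proof -
      have ne: "(\<lambda>_. 0) \<in> {\<beta>. vnorm n \<beta> \<le> Cb}" using Cb0 by (simp add: vnorm_def)
      have "0 \<le> Inf (g ` {\<beta>. vnorm n \<beta> \<le> Cb})"
        by (rule cInf_greatest) (use ne g0 in auto)
      then show ?thesis unfolding eta_def g_def[symmetric] .
    qed
    ultimately show "eta P X d n Cb Astar bstar AM - eta P X d n Cb Astar bstar AN \<le> 0" by simp
  qed
qed

end
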